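(* Let $\mathbb{F}$ be a field, $d\geq1$ and $V$ a vector space over $\mathbb{F}$ of dimension $d+1$. Let $E^*_0,\dots,E^*_d$ be a system of mutually orthogonal idempotents in $\mathrm{End}(V)$ and $A\in\mathrm{End}(V)$ with $E^*_iAE^*_j=0$ if $|i-j|>1$ and $E^*_iAE^*_j\neq0$ if $|i-j|=1$. Assume $A$ is multiplicity-free and bipartite, with primitive idempotents $E_0,\dots,E_d$ and corresponding eigenvalues $\theta_0,\dots,\theta_d$. Let $\theta^*_0,\dots,\theta^*_d\in\mathbb{F}$ and $A^*=\sum_i\theta^*_iE^*_i$. If $(A;\{E_i\}_{i=0}^d;A^*;\{E^*_i\}_{i=0}^d)$ is a Leonard system, then $$\theta_i(\theta^*_{d-i-1}-\theta^*_{i+1})=\theta_{i+1}(\theta^*_{d-i}-\theta^*_i)\qquad(0\le i\le d-1).$$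
   Context: A system of mutually orthogonal idempotents: $E^*_iE^*_j=\delta_{ij}E^*_i$, $\operatorname{rank}E^*_i=1$. $A$ multiplicity-free: $d+1$ distinct eigenvalues in $\mathbb{F}$; $E_i$ is the projection onto the $\theta_i$-eigenspace along the other eigenspaces. Bipartite: $\operatorname{tr}(E^*_iA)=0$ for all $i$. A Leonard system on $V$ is a sequence $(A;\{E_i\};A^*;\{E^*_i\})$ such that $A$ and $A^*$ are multiplicity-free, $E_0,\dots,E_d$ is an ordering of the primitive idempotents of $A$, $E^*_0,\dots,E^*_d$ is an ordering of the primitive idempotents of $A^*$, $E^*_iAE^*_j$ is $0$ if $|i-j|>1$ and nonzero if $|i-j|=1$, and $E_iA^*E_j$ is $0$ if $|i-j|>1$ and nonzero if $|i-j|=1$. *)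

theory Defs
  imports "Jordan_Normal_Form.DL_Rank" "Jordan_Normal_Form.Char_Poly"
begin

text \<open>V = F^(d+1) (column vectors), End(V) = (d+1) x (d+1) matrices over the field 'a.
  Families indexed by 0..d are functions on nat, only their values at i \<le> d matter.\<close>

definition mat_trace :: "'a::comm_ring_1 mat \<Rightarrow> 'a" where
  "mat_trace M = (\<Sum>i<dim_row M. M $$ (i,i))"

definition orth_idem_system :: "nat \<Rightarrow> (nat \<Rightarrow> 'a::field mat) \<Rightarrow> bool" where
  "orth_idem_system d Es \<longleftrightarrow>
     (\<forall>i\<le>d. Es i \<in> carrier_mat (d+1) (d+1)) \<and>
     (\<forall>i\<le>d. \<forall>j\<le>d. Es i * Es j = (if i = j then Es i else 0\<^sub>m (d+1) (d+1))) \<and>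
     (\<forall>i\<le>d. vec_space.rank (d+1) (Es i) = 1)"

definition mult_free :: "nat \<Rightarrow> 'a::field mat \<Rightarrow> (nat \<Rightarrow> 'a) \<Rightarrow> bool" where
  "mult_free d A th \<longleftrightarrow> A \<in> carrier_mat (d+1) (d+1) \<and> inj_on th {0..d} \<and>
     (\<forall>i\<le>d. eigenvalue A (th i))"

text \<open>E is the projection onto the th i-eigenspace of A along the other eigenspaces.\<close>
definition prim_idem :: "nat \<Rightarrow> 'a::field mat \<Rightarrow> (nat \<Rightarrow> 'a) \<Rightarrow> nat \<Rightarrow> 'a mat \<Rightarrow> bool" where
  "prim_idem d A th i E \<longleftrightarrow> E \<in> carrier_mat (d+1) (d+1) \<and>
     (\<forall>v\<in>carrier_vec (d+1). A *\<^sub>v (E *\<^sub>v v) = th i \<cdot>\<^sub>v (E *\<^sub>v v)) \<and>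
     (\<forall>v\<in>carrier_vec (d+1). A *\<^sub>v v = th i \<cdot>\<^sub>v v \<longrightarrow> E *\<^sub>v v = v) \<and>
     (\<forall>j\<le>d. j \<noteq> i \<longrightarrow> (\<forall>v\<in>carrier_vec (d+1). A *\<^sub>v v = th j \<cdot>\<^sub>v v \<longrightarrow> E *\<^sub>v v = 0\<^sub>v (d+1)))"

definition tridiag_wrt :: "nat \<Rightarrow> (nat \<Rightarrow> 'a::field mat) \<Rightarrow> 'a mat \<Rightarrow> bool" where
  "tridiag_wrt d F B \<longleftrightarrow>
     (\<forall>i\<le>d. \<forall>j\<le>d. (i > j + 1 \<or> j > i + 1) \<longrightarrow> F i * B * F j = 0\<^sub>m (d+1) (d+1)) \<and>
     (\<forall>i\<le>d. \<forall>j\<le>d. (i = j + 1 \<or> j = i + 1) \<longrightarrow> F i * B * F j \<noteq> 0\<^sub>m (d+1) (d+1))"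

definition mat_lincomb :: "nat \<Rightarrow> (nat \<Rightarrow> 'a::field) \<Rightarrow> (nat \<Rightarrow> 'a mat) \<Rightarrow> 'a mat" where
  "mat_lincomb d c M = mat (d+1) (d+1) (\<lambda>rc. \<Sum>i\<in>{0..d}. c i * (M i $$ rc))"

definition leonard_system :: "nat \<Rightarrow> 'a::field mat \<Rightarrow> (nat \<Rightarrow> 'a mat) \<Rightarrow> 'a mat \<Rightarrow> (nat \<Rightarrow> 'a mat) \<Rightarrow> bool" where
  "leonard_system d A E As Es \<longleftrightarrow>
     (\<exists>th ths. mult_free d A th \<and> mult_free d As ths \<and>
        (\<forall>i\<le>d. prim_idem d A th i (E i)) \<and> (\<forall>i\<le>d. prim_idem d As ths i (Es i))) \<and>
     tridiag_wrt d Es A \<and> tridiag_wrt d E As"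

end

theory Submission
  imports Defs
begin


lemma tri_sum:
  fixes f :: "nat \<Rightarrow> 'a::comm_monoid_add"
  assumes j: "j \<le> d" and z: "\<And>l. l \<le> d \<Longrightarrow> l + 1 \<noteq> j \<Longrightarrow> l \<noteq> j \<Longrightarrow> l \<noteq> j + 1 \<Longrightarrow> f l = 0"
  shows "(\<Sum>l=0..d. f l) = (if j = 0 then 0 else f (j-1)) + f j + (if j < d then f (j+1) else 0)"
proof -
  let ?S = "{l. l \<le> d \<and> (l + 1 = j \<or> l = j \<or> l = j + 1)}"
  have "(\<Sum>l=0..d. f l) = (\<Sum>l\<in>?S. f l)"
    by (rule sum.mono_neutral_right) (auto intro: z)
  also have "?S = (if j = 0 then {} else {j-1}) \<union> {j} \<union> (if j < d then {j+1} else {})"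
    using j by (auto split: if_splits)
  also have "(\<Sum>l\<in>\<dots>. f l) = (if j = 0 then 0 else f (j-1)) + f j + (if j < d then f (j+1) else 0)"
  proof (cases "j = 0")
    case True then show ?thesis using j by (cases "j < d"; auto simp: ac_simps)
  next
    case False
    then have ne: "j - 1 \<noteq> j + 1" "j - 1 \<noteq> j" "j + 1 \<noteq> j" by auto
    show ?thesis using False j ne by (cases "j < d"; simp add: sum.union_disjoint ac_simps)
  qed
  finally show ?thesis .
qed

locale core =
  fixes d :: nat and T U M :: "nat \<Rightarrow> nat \<Rightarrow> 'a::field" and th ths :: "nat \<Rightarrow> 'a"
  assumes T0: "\<And>j m. j \<le> d \<Longrightarrow> m \<le> d \<Longrightarrow> j \<noteq> m+1 \<Longrightarrow> m \<noteq> j+1 \<Longrightarrow> T j m = 0"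
  and Tsub: "\<And>j. 1 \<le> j \<Longrightarrow> j \<le> d \<Longrightarrow> T j (j-1) \<noteq> 0"
  and H2: "\<And>c j. j \<le> d \<Longrightarrow> (\<Sum>m=0..d. U j m * (\<Sum>l=0..d. T m l * c l)) = th j * (\<Sum>m=0..d. U j m * c m)"
  and M0: "\<And>j m. j \<le> d \<Longrightarrow> m \<le> d \<Longrightarrow> j \<noteq> m+1 \<Longrightarrow> m \<noteq> j+1 \<Longrightarrow> j \<noteq> m \<Longrightarrow> M j m = 0"
  and H3: "\<And>c j. j \<le> d \<Longrightarrow> (\<Sum>m=0..d. U j m * (ths m * c m)) = (\<Sum>m=0..d. M j m * (\<Sum>l=0..d. U m l * c l))"
  and Msup: "\<And>j. j < d \<Longrightarrow> M j (j+1) \<noteq> 0"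
  and H5: "\<And>m. m \<le> d \<Longrightarrow> \<exists>c. (\<Sum>l=0..d. U m l * c l) \<noteq> 0"
  and thinj: "inj_on th {0..d}"
begin

definition cu where "cu j c = (\<Sum>l=0..d. U j l * c l)"
definition Tv where "Tv c m = (\<Sum>l=0..d. T m l * c l)"
definition Ssum where "Ssum k = (\<Sum>h<k. th h)"

lemma Tv_eq: "m \<le> d \<Longrightarrow> Tv c m = (if m = 0 then 0 else T m (m-1) * c (m-1)) + (if m < d then T m (m+1) * c (m+1) else 0)"
  unfolding Tv_def
  by (subst tri_sum[of m d]) (auto simp: T0)

lemma H2': "j \<le> d \<Longrightarrow> cu j (Tv c) = th j * cu j c"
  unfolding cu_def Tv_def using H2 by simp

lemma H3': "j \<le> d \<Longrightarrow> cu j (\<lambda>m. ths m * c m) = (if j=0 then 0 else M j (j-1) * cu (j-1) c) + M j j * cu j c + (if j<d then M j (j+1) * cu (j+1) c else 0)"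
  unfolding cu_def H3
  by (subst tri_sum[of j d]) (auto simp: M0)

lemma cu_diff: "cu j (\<lambda>m. f m - g m) = cu j f - cu j g"
  unfolding cu_def by (simp add: algebra_simps sum_subtractf)

lemma cu_scale: "cu j (\<lambda>m. a * f m) = a * cu j f"
  unfolding cu_def by (simp add: algebra_simps sum_distrib_left)

lemma cu_cong: "(\<And>m. m \<le> d \<Longrightarrow> f m = g m) \<Longrightarrow> cu j f = cu j g"
  unfolding cu_def by (auto intro!: sum.cong)

lemma cu_diff_scale: "cu j (\<lambda>m. f m - a * g m) = cu j f - a * cu j g"
  using cu_diff[of j f "\<lambda>m. a * g m"] cu_scale[of j a g] by simp

primrec w :: "nat \<Rightarrow> nat \<Rightarrow> 'a" where
  "w 0 = (\<lambda>m. if m = 0 then 1 else 0)"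
| "w (Suc k) = (\<lambda>m. Tv (w k) m - th k * w k m)"

declare w.simps(2)[simp del]

lemma w_upper: "k \<le> d \<Longrightarrow> m \<le> d \<Longrightarrow> k < m \<Longrightarrow> w k m = 0"
proof (induction k arbitrary: m)
  case 0 then show ?case by simp
next
  case (Suc k)
  have "Tv (w k) m = 0" using Suc by (subst Tv_eq) auto
  then show ?case using Suc by (simp add: w.simps(2))
qed

lemma w_diag_step: "Suc k \<le> d \<Longrightarrow> w (Suc k) (Suc k) = T (Suc k) k * w k k"
  by (subst w.simps(2), subst Tv_eq) (auto simp: w_upper)

lemma w_diag_nz: "k \<le> d \<Longrightarrow> w k k \<noteq> 0"
proof (induction k)
  case 0 then show ?case by simp
next
  case (Suc k)
  then show ?case using w_diag_step[OF Suc.prems] Tsub[of "Suc k"] by simp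
qed

lemma cu_w_step: "j \<le> d \<Longrightarrow> cu j (w (Suc k)) = (th j - th k) * cu j (w k)"
  by (simp add: w.simps(2) cu_diff_scale H2' algebra_simps)

lemma cu_w: "j \<le> d \<Longrightarrow> cu j (w k) = (\<Prod>h<k. th j - th h) * cu j (w 0)"
proof (induction k)
  case 0 then show ?case by simp
next
  case (Suc k) then show ?case by (simp add: cu_w_step)
qed

lemma cu_w_zero: "j \<le> d \<Longrightarrow> j < k \<Longrightarrow> cu j (w k) = 0"
  by (subst cu_w) auto

lemma cu_w0: assumes m: "m \<le> d" shows "cu m (w 0) \<noteq> 0"
proof
  assume z: "cu m (w 0) = 0"
  have wk: "cu m (w k) = 0" for k using cu_w[OF m, of k] z by simp
  have HH: "\<forall>c. (\<forall>j. k < j \<and> j \<le> d \<longrightarrow> c j = 0) \<longrightarrow> cu m c = 0" if "k \<le> d" for k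
    using that
  proof (induction k)
    case 0
    show ?case
    proof (intro allI impI)
      fix c :: "nat \<Rightarrow> 'a" assume c: "\<forall>j. 0 < j \<and> j \<le> d \<longrightarrow> c j = 0"
      have "cu m c = cu m (\<lambda>l. c 0 * w 0 l)" using c by (intro cu_cong) auto
      then show "cu m c = 0" using z cu_scale by simp
    qed
  next
    case (Suc k)
    show ?case
    proof (intro allI impI)
      fix c :: "nat \<Rightarrow> 'a" assume c: "\<forall>j. Suc k < j \<and> j \<le> d \<longrightarrow> c j = 0"
      define t where "t = c (Suc k) / w (Suc k) (Suc k)"
      have nz: "w (Suc k) (Suc k) \<noteq> 0" using w_diag_nz Suc by blast
      have "\<forall>j. k < j \<and> j \<le> d \<longrightarrow> c j - t * w (Suc k) j = 0"
      proof (intro allI impI)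
        fix j assume j: "k < j \<and> j \<le> d"
        show "c j - t * w (Suc k) j = 0"
        proof (cases "j = Suc k")
          case True then show ?thesis using nz by (simp add: t_def)
        next
          case False then show ?thesis using j c w_upper[of "Suc k" j] Suc by auto
        qed
      qed
      then have "cu m (\<lambda>j. c j - t * w (Suc k) j) = 0" using Suc by auto
      then show "cu m c = 0" using wk by (simp add: cu_diff_scale)
    qed
  qed
  have "cu m c = 0" for c using HH[of d] by auto
  then show False using H5[OF m] unfolding cu_def by auto
qed

lemma cu_ww: "k \<le> d \<Longrightarrow> cu k (w k) \<noteq> 0"
proof -
  assume k: "k \<le> d"
  have "\<forall>h\<in>{..<k}. th k - th h \<noteq> 0"
  proof
    fix h assume "h \<in> {..<k}"
    then show "th k - th h \<noteq> 0" using thinj k by (auto dest: inj_onD)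
  qed
  then have "(\<Prod>h<k. th k - th h) \<noteq> 0" by (subst prod_zero_iff) auto
  then show ?thesis using cu_w[OF k, of k] cu_w0[OF k] by simp
qed

lemma zero_lemma: "k \<le> d+1 \<Longrightarrow> (\<forall>j. k \<le> j \<and> j \<le> d \<longrightarrow> y j = 0) \<Longrightarrow> (\<forall>j<k. cu j y = 0) \<Longrightarrow> j \<le> d \<Longrightarrow> y j = 0"
proof (induction k arbitrary: y j)
  case 0 then show ?case by auto
next
  case (Suc k)
  define t where "t = y k / w k k"
  have kd: "k \<le> d" using Suc by simp
  have nz: "w k k \<noteq> 0" using w_diag_nz kd by blast
  define y' where "y' = (\<lambda>l. y l - t * w k l)"
  have y'1: "\<forall>j. k \<le> j \<and> j \<le> d \<longrightarrow> y' j = 0"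
  proof (intro allI impI)
    fix j assume j: "k \<le> j \<and> j \<le> d"
    show "y' j = 0"
    proof (cases "j = k")
      case True then show ?thesis using nz by (simp add: t_def y'_def)
    next
      case False then show ?thesis using j Suc.prems w_upper[of k j] kd by (auto simp: y'_def)
    qed
  qed
  have y'2: "\<forall>j<k. cu j y' = 0"
    using Suc.prems kd by (auto simp: y'_def cu_diff_scale cu_w_zero)
  have y'0: "\<And>l. l \<le> d \<Longrightarrow> y' l = 0" using Suc.IH[OF _ y'1 y'2] kd by simp
  have "cu k y = cu k (\<lambda>l. t * w k l)" using y'0 by (intro cu_cong) (auto simp: y'_def)
  then have "t * cu k (w k) = 0" using Suc.prems cu_scale by auto
  then have "t = 0" using cu_ww[OF kd] by simp
  then show ?case using y'0[OF Suc.prems(4)] by (simp add: y'_def)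
qed

definition phi where "phi k = (ths (k-1) - ths k) * w k (k-1) / w (k-1) (k-1)"

lemma phi_eq: assumes k: "1 \<le> k" "k \<le> d" and j: "j \<le> d"
  shows "ths j * w k j - ths k * w k j = phi k * w (k-1) j"
proof -
  define y where "y = (\<lambda>j. ths j * w k j - ths k * w k j - phi k * w (k-1) j)"
  have nz: "w (k-1) (k-1) \<noteq> 0" using w_diag_nz k by simp
  have y1: "\<forall>j. k-1 \<le> j \<and> j \<le> d \<longrightarrow> y j = 0"
  proof (intro allI impI)
    fix j assume j: "k-1 \<le> j \<and> j \<le> d"
    consider "j = k-1" | "j = k" | "j > k" using j by linarith
    then show "y j = 0"
    proof cases
      case 1 then show ?thesis using nz k by (simp add: y_def phi_def field_simps)
    next
      case 2 then show ?thesis using k w_upper[of "k-1" k] by (simp add: y_def)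
    next
      case 3 then show ?thesis using k j w_upper[of "k-1" j] w_upper[of k j] by (simp add: y_def)
    qed
  qed
  have y2: "\<forall>j<k-1. cu j y = 0"
  proof (intro allI impI)
    fix j assume j: "j < k-1"
    have "cu j y = cu j (\<lambda>m. ths m * w k m) - ths k * cu j (w k) - phi k * cu j (w (k-1))"
      unfolding y_def
      using cu_diff_scale[of j "\<lambda>m. ths m * w k m - ths k * w k m" "phi k" "w (k-1)"]
        cu_diff_scale[of j "\<lambda>m. ths m * w k m" "ths k" "w k"] by simp
    also have "\<dots> = 0" using j k
      by (subst H3') (auto simp: cu_w_zero)
    finally show "cu j y = 0" .
  qed
  have "y j = 0" using zero_lemma[OF _ y1 y2 j] k by simp
  then show ?thesis by (simp add: y_def)
qed

lemma eqn: assumes k: "1 \<le> k" "k \<le> d" and j: "j \<le> d"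
  shows "cu j (\<lambda>m. ths m * w k m) - ths k * cu j (w k) = phi k * cu j (w (k-1))"
proof -
  have "cu j (\<lambda>m. ths m * w k m - ths k * w k m) = cu j (\<lambda>m. phi k * w (k-1) m)"
    using phi_eq k by (intro cu_cong) auto
  then show ?thesis using cu_diff_scale[of j "\<lambda>m. ths m * w k m" "ths k" "w k"] cu_scale by simp
qed

lemma w_sub: "1 \<le> k \<Longrightarrow> k \<le> d \<Longrightarrow> w k (k-1) = - Ssum k * w (k-1) (k-1)"
proof (induction k)
  case 0 then show ?case by simp
next
  case (Suc k)
  show ?case
  proof (cases "k = 0")
    case True then show ?thesis using Suc by (simp add: Tv_eq Ssum_def w.simps(2))
  next
    case False
    have IH: "w k (k-1) = - Ssum k * w (k-1) (k-1)" using Suc False by simp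
    have d1: "w k k = T k (k-1) * w (k-1) (k-1)" using w_diag_step[of "k-1"] Suc False by simp
    have "w (Suc k) k = T k (k-1) * w k (k-1) - th k * w k k"
      using Suc False by (simp add: Tv_eq w_upper w.simps(2))
    also have "\<dots> = - Ssum (Suc k) * w k k" using IH d1 by (simp add: Ssum_def algebra_simps)
    finally show ?thesis by simp
  qed
qed

lemma phi_formula: "1 \<le> k \<Longrightarrow> k \<le> d \<Longrightarrow> phi k = (ths k - ths (k-1)) * Ssum k"
  using w_sub w_diag_nz[of "k-1"] by (simp add: phi_def field_simps)

lemma phi_nz: assumes k: "1 \<le> k" "k \<le> d" shows "phi k \<noteq> 0"
proof -
  have "cu (k-1) (\<lambda>m. ths m * w k m) - ths k * cu (k-1) (w k) = phi k * cu (k-1) (w (k-1))"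
    using eqn k by simp
  moreover have "cu (k-1) (\<lambda>m. ths m * w k m) = M (k-1) k * cu k (w k)"
    using k by (subst H3') (auto simp: cu_w_zero)
  ultimately have "M (k-1) k * cu k (w k) = phi k * cu (k-1) (w (k-1))"
    using k by (simp add: cu_w_zero)
  moreover have "M (k-1) k \<noteq> 0" using Msup[of "k-1"] k by simp
  ultimately show ?thesis using cu_ww[of k] k by auto
qed

lemma Ssum_nz: "1 \<le> k \<Longrightarrow> k \<le> d \<Longrightarrow> Ssum k \<noteq> 0"
  using phi_nz phi_formula by fastforce

lemma th_ne: "a \<le> d \<Longrightarrow> b \<le> d \<Longrightarrow> a \<noteq> b \<Longrightarrow> th a - th b \<noteq> 0"
  using thinj by (auto dest: inj_onD)

lemma q_formula: assumes i: "i < d"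
  shows "M i i = ths i + (if i = 0 then 0 else (ths i - ths (i-1)) * Ssum i / (th i - th (i-1)))
            - (ths (i+1) - ths i) * Ssum (i+1) / (th (i+1) - th i)"
proof -
  have e1: "cu i (\<lambda>m. ths m * w (i+1) m) - ths (i+1) * cu i (w (i+1)) = phi (i+1) * cu i (w i)"
    using eqn[of "i+1" i] i by simp
  have e1b: "cu i (\<lambda>m. ths m * w (i+1) m) = M i (i+1) * cu (i+1) (w (i+1))"
    using i by (subst H3') (auto simp: cu_w_zero)
  have A1: "M i (i+1) * cu (i+1) (w (i+1)) = phi (i+1) * cu i (w i)"
    using e1 e1b i by (simp add: cu_w_zero)
  have A2: "cu (i+1) (w (i+1)) = (th (i+1) - th i) * cu (i+1) (w i)"
    using cu_w_step[of "i+1" i] i by simp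
  have A3: "cu i (\<lambda>m. ths m * w i m) - ths i * cu i (w i) = (if i = 0 then 0 else phi i * cu i (w (i-1)))"
  proof (cases "i = 0")
    case True
    have "cu i (\<lambda>m. ths m * w i m) = cu i (\<lambda>m. ths 0 * w 0 m)" using True by (intro cu_cong) auto
    then show ?thesis using True cu_scale by simp
  next
    case False then show ?thesis using eqn[of i i] i by simp
  qed
  have A4: "cu i (\<lambda>m. ths m * w i m) = M i i * cu i (w i) + M i (i+1) * cu (i+1) (w i)"
    using i by (subst H3') (auto simp: cu_w_zero)
  have A5: "i \<noteq> 0 \<Longrightarrow> cu i (w i) = (th i - th (i-1)) * cu i (w (i-1))"
    using cu_w_step[of i "i-1"] i by simp
  have gnz: "cu i (w i) \<noteq> 0" using cu_ww i by simp
  have d1: "th (i+1) - th i \<noteq> 0" using th_ne i by simp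
  have B: "M i (i+1) * cu (i+1) (w i) = phi (i+1) * cu i (w i) / (th (i+1) - th i)"
  proof -
    have "M i (i+1) * cu (i+1) (w i) * (th (i+1) - th i) = phi (i+1) * cu i (w i)"
      using A1 A2 by (simp add: ac_simps)
    then show ?thesis using d1 by (simp add: field_simps)
  qed
  have C: "(if i = 0 then 0 else phi i * cu i (w (i-1))) =
      (if i = 0 then 0 else phi i / (th i - th (i-1))) * cu i (w i)"
  proof (cases "i = 0")
    case False
    have dd: "th i - th (i-1) \<noteq> 0" using th_ne i False by simp
    have "phi i * cu i (w (i-1)) = phi i / (th i - th (i-1)) * ((th i - th (i-1)) * cu i (w (i-1)))"
      using dd by simp
    then show ?thesis using A5 False by simp
  qed simp
  have "M i i * cu i (w i) = (ths i + (if i = 0 then 0 else phi i / (th i - th (i-1)))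
       - phi (i+1) / (th (i+1) - th i)) * cu i (w i)"
    using A3 A4 B C by (simp add: algebra_simps)
  then have "M i i = ths i + (if i = 0 then 0 else phi i / (th i - th (i-1))) - phi (i+1) / (th (i+1) - th i)"
    using gnz by simp
  then show ?thesis using phi_formula[of i] phi_formula[of "i+1"] i by (cases "i = 0") auto
qed

end


lemma final_alg:
  fixes th ths :: "nat \<Rightarrow> 'a::field"
  assumes d: "1 \<le> d" and inj: "inj_on th {0..d}"
  and Snz: "\<And>k. 1 \<le> k \<Longrightarrow> k \<le> d \<Longrightarrow> (\<Sum>h<k. th h) \<noteq> 0"
  and E: "\<And>i. i < d \<Longrightarrow> ths i + (if i = 0 then 0 else (ths i - ths (i-1)) * (\<Sum>h<i. th h) / (th i - th (i-1)))
              - (ths (i+1) - ths i) * (\<Sum>h<i+1. th h) / (th (i+1) - th i)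
        = ths (d-i) + (if i = 0 then 0 else (ths (d-i) - ths (d-(i-1))) * (\<Sum>h<i. th h) / (th i - th (i-1)))
              - (ths (d-(i+1)) - ths (d-i)) * (\<Sum>h<i+1. th h) / (th (i+1) - th i)"
  shows "\<forall>i<d. th i * (ths (d - i - 1) - ths (i + 1)) = th (i + 1) * (ths (d - i) - ths i)"
proof -
  define S where "S k = (\<Sum>h<k. th h)" for k
  define y where "y k = ths k - ths (d-k)" for k
  define z where "z k = th 0 * y k - y 0 * th k" for k
  have ne: "th a - th b \<noteq> 0" if "a \<le> d" "b \<le> d" "a \<noteq> b" for a b
    using inj that by (auto dest: inj_onD)
  define c1 where "c1 i = (if i = 0 then 0 else S i / (th i - th (i-1)))" for i
  define c2 where "c2 i = S (i+1) / (th (i+1) - th i)" for i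
  have E': "ths i + c1 i * (ths i - ths (i-1)) - c2 i * (ths (i+1) - ths i)
     = ths (d-i) + c1 i * (ths (d-i) - ths (d-(i-1))) - c2 i * (ths (d-(i+1)) - ths (d-i))" if i: "i < d" for i
    using E[OF i] by (cases "i = 0") (simp_all add: c1_def c2_def S_def mult.commute)
  have Ry: "y i + c1 i * (y i - y (i-1)) - c2 i * (y (i+1) - y i) = 0" if i: "i < d" for i
  proof -
    have "y i + c1 i * (y i - y (i-1)) - c2 i * (y (i+1) - y i) =
      (ths i + c1 i * (ths i - ths (i-1)) - c2 i * (ths (i+1) - ths i))
     - (ths (d-i) + c1 i * (ths (d-i) - ths (d-(i-1))) - c2 i * (ths (d-(i+1)) - ths (d-i)))"
      by (simp add: y_def algebra_simps)
    then show ?thesis using E'[OF i] by simp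
  qed
  have Rt: "th i + c1 i * (th i - th (i-1)) - c2 i * (th (i+1) - th i) = 0" if i: "i < d" for i
  proof -
    have "th (i+1) - th i \<noteq> 0" using ne[of "i+1" i] i by simp
    moreover have "i \<noteq> 0 \<Longrightarrow> th i - th (i-1) \<noteq> 0" using ne[of i "i-1"] i by simp
    ultimately show ?thesis by (cases "i = 0") (simp_all add: S_def c1_def c2_def)
  qed
  have Rz: "z i + c1 i * (z i - z (i-1)) - c2 i * (z (i+1) - z i) = 0" if i: "i < d" for i
  proof -
    have "z i + c1 i * (z i - z (i-1)) - c2 i * (z (i+1) - z i)
      = th 0 * (y i + c1 i * (y i - y (i-1)) - c2 i * (y (i+1) - y i))
        - y 0 * (th i + c1 i * (th i - th (i-1)) - c2 i * (th (i+1) - th i))"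
      by (simp add: z_def algebra_simps)
    then show ?thesis using Ry[OF i] Rt[OF i] by simp
  qed
  have zz: "\<forall>l\<le>j. l \<le> d \<longrightarrow> z l = 0" for j
  proof (induction j)
    case 0 then show ?case by (simp add: z_def)
  next
    case (Suc j)
    show ?case
    proof (intro allI impI)
      fix l assume l: "l \<le> Suc j" "l \<le> d"
      show "z l = 0"
      proof (cases "l = Suc j")
        case False then show ?thesis using Suc l by auto
      next
        case True
        have j: "j < d" using l True by simp
        have zj: "z j = 0" using Suc j by simp
        have zj1: "j \<noteq> 0 \<Longrightarrow> z (j-1) = 0" using Suc j by simp
        have "c1 j * (z j - z (j-1)) = 0"
          using zj zj1 by (cases "j = 0") (simp_all add: c1_def)
        then have "z j + c1 j * (z j - z (j-1)) - c2 j * (z (j+1) - z j) = - (c2 j * z (j+1))"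
          using zj by simp
        then have "c2 j * z (j+1) = 0" using Rz[OF j] by simp
        moreover have "S (j+1) \<noteq> 0" using Snz[of "j+1"] j by (simp add: S_def)
        moreover have "th (j+1) - th j \<noteq> 0" using ne[of "j+1" j] j by simp
        ultimately show ?thesis using True by (simp add: c2_def)
      qed
    qed
  qed
  have t0: "th 0 \<noteq> 0" using Snz[of 1] d by simp
  show ?thesis
  proof (intro allI impI)
    fix i assume i: "i < d"
    have a: "th 0 * y (i+1) = y 0 * th (i+1)" using zz[of "i+1"] i by (simp add: z_def)
    have b: "th 0 * y i = y 0 * th i" using zz[of i] i by (simp add: z_def)
    have "th 0 * (th i * y (i+1)) = th i * (th 0 * y (i+1))" by (simp add: ac_simps)
    also have "\<dots> = th i * (y 0 * th (i+1))" by (simp only: a)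
    also have "\<dots> = th (i+1) * (y 0 * th i)" by (simp add: ac_simps)
    also have "\<dots> = th (i+1) * (th 0 * y i)" by (simp only: b)
    also have "\<dots> = th 0 * (th (i+1) * y i)" by (simp add: ac_simps)
    finally have "th 0 * (th i * y (i+1)) = th 0 * (th (i+1) * y i)" .
    then have "th i * y (i+1) = th (i+1) * y i" using t0 by simp
    then show "th i * (ths (d - i - 1) - ths (i + 1)) = th (i + 1) * (ths (d - i) - ths i)"
      by (simp add: y_def algebra_simps)
  qed
qed


definition Umat :: "nat \<Rightarrow> nat \<Rightarrow> 'a::semiring_1 mat" where
  "Umat n j = mat n n (\<lambda>(r,c). if r = j \<and> c = j then 1 else 0)"
definition dmat :: "nat \<Rightarrow> (nat \<Rightarrow> 'a::semiring_1) \<Rightarrow> 'a mat" where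
  "dmat n f = mat n n (\<lambda>(r,c). if r = c then f r else 0)"

lemma Umat_carrier[simp]: "Umat n j \<in> carrier_mat n n" by (simp add: Umat_def)
lemma dmat_carrier[simp]: "dmat n f \<in> carrier_mat n n" by (simp add: dmat_def)
lemma sq_mult[simp]: "A \<in> carrier_mat n n \<Longrightarrow> B \<in> carrier_mat n n \<Longrightarrow> A * B \<in> carrier_mat n n"
  by (rule mult_carrier_mat)
lemma Umat_dim[simp]: "dim_row (Umat n j) = n" "dim_col (Umat n j) = n" by (simp_all add: Umat_def)
lemma dmat_dim[simp]: "dim_row (dmat n f) = n" "dim_col (dmat n f) = n" by (simp_all add: dmat_def)

lemma mv_sum: "X \<in> carrier_mat n n \<Longrightarrow> v \<in> carrier_vec n \<Longrightarrow> i < n \<Longrightarrow>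
   (X *\<^sub>v v) $ i = (\<Sum>k\<in>{0..<n}. X $$ (i,k) * v $ k)"
  by (simp add: scalar_prod_def)

lemma mm_sum: "X \<in> carrier_mat n n \<Longrightarrow> Y \<in> carrier_mat n n \<Longrightarrow> i < n \<Longrightarrow> j < n \<Longrightarrow>
   (X * Y) $$ (i,j) = (\<Sum>k\<in>{0..<n}. X $$ (i,k) * Y $$ (k,j))"
  by (simp add: scalar_prod_def)

lemma Umat_mv: assumes v: "v \<in> carrier_vec n" and j: "j < n"
  shows "Umat n j *\<^sub>v v = v $ j \<cdot>\<^sub>v unit_vec n j"
proof (rule eq_vecI)
  fix i assume i: "i < dim_vec (v $ j \<cdot>\<^sub>v unit_vec n j)"
  then have i': "i < n" by simp
  have "(Umat n j *\<^sub>v v) $ i = (\<Sum>k\<in>{0..<n}. (if i = j \<and> k = j then 1 else 0) * v $ k)"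
    using v i' by (subst mv_sum[of _ n]) (auto simp: Umat_def)
  also have "\<dots> = (if i = j then v $ j else 0)"
    using j by (cases "i = j") (auto simp: if_distrib[of "\<lambda>x. x * _"] cong: if_cong)
  finally show "(Umat n j *\<^sub>v v) $ i = (v $ j \<cdot>\<^sub>v unit_vec n j) $ i" using i' j by simp
qed (simp add: Umat_def)

lemma mv_unit: assumes "(B :: 'a::field mat) \<in> carrier_mat n n" "k < n" shows "B *\<^sub>v unit_vec n k = col B k"
proof (intro eq_vecI)
  fix i assume "i < dim_vec (col B k)"
  then show "(B *\<^sub>v unit_vec n k) $ i = col B k $ i"
    using assms scalar_prod_right_unit[of k n "row B i"] by auto
qed (use assms in auto)

lemma col_Umat: "k < n \<Longrightarrow> j < n \<Longrightarrow> col (Umat n j) k = (if k = j then unit_vec n j else 0\<^sub>v n)"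
  by (intro eq_vecI) (auto simp: Umat_def unit_vec_def)

lemma col_dmat: "k < n \<Longrightarrow> col (dmat n f) k = f k \<cdot>\<^sub>v unit_vec n k"
  by (intro eq_vecI) (auto simp: dmat_def unit_vec_def)

lemma Umat_left: assumes Y: "Y \<in> carrier_mat n n" and j: "j < n"
  shows "Umat n j * Y = mat n n (\<lambda>(r,c). if r = j then Y $$ (j,c) else 0)"
proof (rule eq_matI)
  fix r c assume r: "r < dim_row (mat n n (\<lambda>(r,c). if r = j then Y $$ (j,c) else 0))"
    and c: "c < dim_col (mat n n (\<lambda>(r,c). if r = j then Y $$ (j,c) else 0))"
  then have r': "r < n" and c': "c < n" by auto
  have "(Umat n j * Y) $$ (r,c) = (\<Sum>k\<in>{0..<n}. (if r = j \<and> k = j then 1 else 0) * Y $$ (k,c))"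
    using Y r' c' by (subst mm_sum[of _ n]) (auto simp: Umat_def)
  also have "\<dots> = (if r = j then Y $$ (j,c) else 0)"
    using j by (cases "r = j") (auto simp: if_distrib[of "\<lambda>x. x * _"] cong: if_cong)
  finally show "(Umat n j * Y) $$ (r,c) = mat n n (\<lambda>(r,c). if r = j then Y $$ (j,c) else 0) $$ (r,c)"
    using r' c' by simp
qed (use Y in auto)

lemma Umat_sandwich: assumes Y: "Y \<in> carrier_mat n n" and j: "j < n" and m: "m < n"
  shows "Umat n j * Y * Umat n m = mat n n (\<lambda>(r,c). if r = j \<and> c = m then Y $$ (j,m) else 0)"
proof (rule eq_matI)
  let ?Z = "mat n n (\<lambda>(r,c). if r = j then Y $$ (j,c) else 0)"
  fix r c assume r: "r < dim_row (mat n n (\<lambda>(r,c). if r = j \<and> c = m then Y $$ (j,m) else 0))"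
    and c: "c < dim_col (mat n n (\<lambda>(r,c). if r = j \<and> c = m then Y $$ (j,m) else 0))"
  then have r': "r < n" and c': "c < n" by auto
  have "(Umat n j * Y * Umat n m) $$ (r,c) = (?Z * Umat n m) $$ (r,c)"
    using Umat_left[OF Y j] by simp
  also have "\<dots> = (\<Sum>k\<in>{0..<n}. ?Z $$ (r,k) * (if k = m \<and> c = m then 1 else 0))"
    using r' c' by (subst mm_sum[of _ n]) (auto simp: Umat_def)
  also have "\<dots> = (\<Sum>k\<in>{0..<n}. (if r = j then Y $$ (j,k) else 0) * (if k = m \<and> c = m then 1 else 0))"
    using r' by (intro sum.cong) auto
  also have "\<dots> = (if r = j \<and> c = m then Y $$ (j,m) else 0)"
    using m by (cases "r = j"; cases "c = m") (auto simp: if_distrib[of "\<lambda>x. _ * x"] cong: if_cong)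
  finally show "(Umat n j * Y * Umat n m) $$ (r,c) = mat n n (\<lambda>(r,c). if r = j \<and> c = m then Y $$ (j,m) else 0) $$ (r,c)"
    using r' c' by simp
qed (use Y in auto)

lemma trace_cyc: assumes X: "X \<in> carrier_mat n n" and Y: "Y \<in> carrier_mat n n"
  shows "mat_trace (X * Y) = mat_trace (Y * X)"
proof -
  have "mat_trace (X * Y) = (\<Sum>i\<in>{0..<n}. \<Sum>k\<in>{0..<n}. X $$ (i,k) * Y $$ (k,i))"
    unfolding mat_trace_def using X Y by (auto simp: scalar_prod_def lessThan_atLeast0 intro!: sum.cong)
  also have "\<dots> = (\<Sum>k\<in>{0..<n}. \<Sum>i\<in>{0..<n}. Y $$ (k,i) * X $$ (i,k))"
    by (subst sum.swap) (simp add: mult.commute)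
  also have "\<dots> = mat_trace (Y * X)"
    unfolding mat_trace_def using X Y by (auto simp: scalar_prod_def lessThan_atLeast0 intro!: sum.cong)
  finally show ?thesis .
qed

lemma trace_Umat: assumes Y: "Y \<in> carrier_mat n n" and j: "j < n"
  shows "mat_trace (Umat n j * Y) = Y $$ (j,j)"
proof -
  have "mat_trace (Umat n j * Y) = (\<Sum>i\<in>{0..<n}. if i = j then Y $$ (j,j) else 0)"
    unfolding mat_trace_def Umat_left[OF Y j] by (auto simp: lessThan_atLeast0 intro!: sum.cong)
  also have "\<dots> = Y $$ (j,j)" using j by simp
  finally show ?thesis .
qed

lemma smult_vec_eq0: assumes "(b :: 'a::field vec) \<in> carrier_vec n" "b \<noteq> 0\<^sub>v n" "a \<cdot>\<^sub>v b = 0\<^sub>v n"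
  shows "a = 0"
proof -
  obtain i where i: "i < n" "b $ i \<noteq> 0"
    using assms(1,2) by (metis carrier_vecD eq_vecI index_zero_vec(1) index_zero_vec(2))
  have "(a \<cdot>\<^sub>v b) $ i = 0" using assms(3) i by simp
  then show ?thesis using i assms(1) by simp
qed

lemma eig_basis:
  fixes M :: "'a::field mat" and P :: "nat \<Rightarrow> 'a mat" and lam :: "nat \<Rightarrow> 'a"
  assumes M: "M \<in> carrier_mat n n" and ev: "\<And>j. j < n \<Longrightarrow> eigenvalue M (lam j)"
  and P: "\<And>j. j < n \<Longrightarrow> P j \<in> carrier_mat n n"
  and fx: "\<And>j v. j < n \<Longrightarrow> v \<in> carrier_vec n \<Longrightarrow> M *\<^sub>v v = lam j \<cdot>\<^sub>v v \<Longrightarrow> P j *\<^sub>v v = v"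
  and kl: "\<And>j k v. j < n \<Longrightarrow> k < n \<Longrightarrow> k \<noteq> j \<Longrightarrow> v \<in> carrier_vec n \<Longrightarrow> M *\<^sub>v v = lam k \<cdot>\<^sub>v v \<Longrightarrow> P j *\<^sub>v v = 0\<^sub>v n"
  shows "\<exists>B Bi. B \<in> carrier_mat n n \<and> Bi \<in> carrier_mat n n \<and> B * Bi = 1\<^sub>m n \<and> Bi * B = 1\<^sub>m n \<and>
    (\<forall>j<n. P j = B * Umat n j * Bi) \<and> Bi * M * B = dmat n lam"
proof -
  have "\<forall>j<n. \<exists>v. eigenvector M v (lam j)" using ev eigenvalue_def by auto
  then obtain b where b: "\<And>j. j < n \<Longrightarrow> eigenvector M (b j) (lam j)" by metis
  have bc: "b j \<in> carrier_vec n" "b j \<noteq> 0\<^sub>v n" "M *\<^sub>v b j = lam j \<cdot>\<^sub>v b j" if "j < n" for j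
    using b[OF that] M unfolding eigenvector_def by auto
  define B where "B = mat n n (\<lambda>(r,c). b c $ r)"
  have Bc: "B \<in> carrier_mat n n" by (simp add: B_def)
  have colB: "col B k = b k" if "k < n" for k
    using that bc(1)[OF that] by (intro eq_vecI) (auto simp: B_def)
  have Pb: "P j *\<^sub>v b k = (if k = j then b k else 0\<^sub>v n)" if "j < n" "k < n" for j k
    using fx[OF that(1) bc(1)[OF that(2)]] kl[OF that _ bc(1)[OF that(2)]] bc(3)[OF that(2)] by auto
  have PB: "P j * B = B * Umat n j" if j: "j < n" for j
  proof (rule mat_col_eqI)
    fix k assume "k < dim_col (B * Umat n j)"
    then have k: "k < n" by simp
    have "col (P j * B) k = P j *\<^sub>v b k" using col_mult2[OF P[OF j] Bc k] colB[OF k] by simp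
    moreover have "col (B * Umat n j) k = (if k = j then b k else 0\<^sub>v n)"
      using Bc k j col_mult2[OF Bc Umat_carrier[of n j] k] by (auto simp: col_Umat mv_unit colB)
    ultimately show "col (P j * B) k = col (B * Umat n j) k" using Pb j k by simp
  qed (use P[OF j] Bc in auto)
  have MB: "M * B = B * dmat n lam"
  proof (rule mat_col_eqI)
    fix k assume "k < dim_col (B * dmat n lam)"
    then have k: "k < n" by simp
    have "col (M * B) k = M *\<^sub>v b k" using col_mult2[OF M Bc k] colB[OF k] by (simp only:)
    also have "\<dots> = lam k \<cdot>\<^sub>v b k" by (rule bc(3)[OF k])
    finally have "col (M * B) k = lam k \<cdot>\<^sub>v b k" .
    moreover have "col (B * dmat n lam) k = lam k \<cdot>\<^sub>v b k"
      using Bc k col_mult2[OF Bc dmat_carrier[of n lam] k] mult_mat_vec[OF Bc unit_vec_carrier[of n k], of "lam k"]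
      by (simp add: col_dmat mv_unit colB)
    ultimately show "col (M * B) k = col (B * dmat n lam) k" by simp
  qed (use M Bc in auto)
  have "det B \<noteq> 0"
  proof
    assume "det B = 0"
    then obtain v where v: "v \<in> carrier_vec n" "v \<noteq> 0\<^sub>v n" "B *\<^sub>v v = 0\<^sub>v n"
      using det_0_iff_vec_prod_zero[OF Bc] by auto
    have "v $ j = 0" if j: "j < n" for j
    proof -
      have "(P j * B) *\<^sub>v v = P j *\<^sub>v (B *\<^sub>v v)" using P[OF j] Bc v by simp
      also have "\<dots> = 0\<^sub>v n" using v P[OF j] by (intro eq_vecI) auto
      finally have 1: "(P j * B) *\<^sub>v v = 0\<^sub>v n" .
      have "(B * Umat n j) *\<^sub>v v = B *\<^sub>v (Umat n j *\<^sub>v v)"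
        using assoc_mult_mat_vec[OF Bc Umat_carrier[of n j] v(1)] .
      also have "\<dots> = v $ j \<cdot>\<^sub>v b j" using Bc v j mult_mat_vec[OF Bc unit_vec_carrier[of n j], of "v $ j"]
        by (simp add: Umat_mv mv_unit colB)
      finally have "v $ j \<cdot>\<^sub>v b j = 0\<^sub>v n" using 1 PB[OF j] by simp
      then show ?thesis using smult_vec_eq0 bc j by blast
    qed
    then have "v = 0\<^sub>v n" using v by (intro eq_vecI) auto
    then show False using v by simp
  qed
  from det_non_zero_imp_unit[OF Bc this, of undefined]
  obtain Bi where Bi: "Bi \<in> carrier_mat n n" "Bi * B = 1\<^sub>m n" "B * Bi = 1\<^sub>m n"
    unfolding Units_def ring_mat_def by auto
  have peq: "\<forall>j<n. P j = B * Umat n j * Bi"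
  proof (intro allI impI)
    fix j assume j: "j < n"
    have "P j = P j * (B * Bi)" using P[OF j] Bi by simp
    also have "\<dots> = (P j * B) * Bi" using P[OF j] Bc Bi by simp
    also have "\<dots> = B * Umat n j * Bi" using PB[OF j] by simp
    finally show "P j = B * Umat n j * Bi" .
  qed
  have meq: "Bi * M * B = dmat n lam"
  proof -
    have "Bi * M * B = Bi * (M * B)" using Bi M Bc by simp
    also have "\<dots> = (Bi * B) * dmat n lam" using MB assoc_mult_mat[OF Bi(1) Bc dmat_carrier[of n lam]] by simp
    also have "\<dots> = dmat n lam" using Bi by simp
    finally show "Bi * M * B = dmat n lam" .
  qed
  show ?thesis
    by (rule exI[of _ B], rule exI[of _ Bi]) (intro conjI Bc Bi(1) Bi(3) Bi(2) peq meq)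
qed

lemma sandwich_eq:
  fixes B Bi X :: "'a::field mat"
  assumes B: "B \<in> carrier_mat n n" and Bi: "Bi \<in> carrier_mat n n" and X: "X \<in> carrier_mat n n"
  shows "(B * Umat n j * Bi) * X * (B * Umat n m * Bi) = B * (Umat n j * (Bi * X * B) * Umat n m) * Bi"
proof -
  have as: "\<And>P Q R. P \<in> carrier_mat n n \<Longrightarrow> Q \<in> carrier_mat n n \<Longrightarrow> R \<in> carrier_mat n n \<Longrightarrow> P * Q * R = P * (Q * R)"
    by simp
  show ?thesis using B Bi X by (simp add: as)
qed

lemma sandwich:
  fixes B Bi X :: "'a::field mat"
  assumes B: "B \<in> carrier_mat n n" and Bi: "Bi \<in> carrier_mat n n" and BB: "B * Bi = 1\<^sub>m n" "Bi * B = 1\<^sub>m n"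
    and X: "X \<in> carrier_mat n n" and j: "j < n" and m: "m < n"
  shows "(B * Umat n j * Bi) * X * (B * Umat n m * Bi) = 0\<^sub>m n n \<longleftrightarrow> (Bi * X * B) $$ (j,m) = 0"
proof -
  define Y where "Y = Bi * X * B"
  have Yc: "Y \<in> carrier_mat n n" using B Bi X by (simp add: Y_def)
  define Z where "Z = Umat n j * Y * Umat n m"
  have as: "\<And>P Q R. P \<in> carrier_mat n n \<Longrightarrow> Q \<in> carrier_mat n n \<Longrightarrow> R \<in> carrier_mat n n \<Longrightarrow> P * Q * R = P * (Q * R)"
    by simp
  have Zc: "Z \<in> carrier_mat n n" using Yc by (simp add: Z_def)
  have Z: "Z = mat n n (\<lambda>(r,c). if r = j \<and> c = m then Y $$ (j,m) else 0)"
    using Umat_sandwich[OF Yc j m] by (simp add: Z_def)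
  have eq: "(B * Umat n j * Bi) * X * (B * Umat n m * Bi) = B * Z * Bi"
    using sandwich_eq[OF B Bi X] by (simp add: Z_def Y_def)
  show ?thesis
  proof
    assume "(B * Umat n j * Bi) * X * (B * Umat n m * Bi) = 0\<^sub>m n n"
    then have 0: "B * Z * Bi = 0\<^sub>m n n" using eq by simp
    have "Z = (Bi * B) * Z * (Bi * B)" using BB Zc by simp
    also have "\<dots> = Bi * (B * Z * Bi) * B" using B Bi Zc by (simp add: as)
    also have "\<dots> = 0\<^sub>m n n" using 0 B Bi by simp
    finally have "Z $$ (j,m) = 0" using j m by simp
    then show "(Bi * X * B) $$ (j,m) = 0" using Z j m by (simp add: Y_def)
  next
    assume "(Bi * X * B) $$ (j,m) = 0"
    then have "Z = 0\<^sub>m n n" using Z by (intro eq_matI) (auto simp: Y_def)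
    then show "(B * Umat n j * Bi) * X * (B * Umat n m * Bi) = 0\<^sub>m n n" using eq B Bi by simp
  qed
qed

lemma trace_sandwich:
  fixes B Bi X :: "'a::field mat"
  assumes B: "B \<in> carrier_mat n n" and Bi: "Bi \<in> carrier_mat n n" and X: "X \<in> carrier_mat n n" and j: "j < n"
  shows "mat_trace ((B * Umat n j * Bi) * X) = (Bi * X * B) $$ (j,j)"
proof -
  have as: "\<And>P Q R. P \<in> carrier_mat n n \<Longrightarrow> Q \<in> carrier_mat n n \<Longrightarrow> R \<in> carrier_mat n n \<Longrightarrow> P * Q * R = P * (Q * R)"
    by simp
  have "mat_trace ((B * Umat n j * Bi) * X) = mat_trace (B * (Umat n j * Bi * X))"
    using B Bi X by (simp add: as)
  also have "\<dots> = mat_trace ((Umat n j * Bi * X) * B)"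
    by (rule trace_cyc[of _ n]) (use B Bi X in auto)
  also have "(Umat n j * Bi * X) * B = Umat n j * (Bi * X * B)"
    using B Bi X by (simp add: as)
  also have "mat_trace \<dots> = (Bi * X * B) $$ (j,j)"
    by (rule trace_Umat) (use B Bi X j in auto)
  finally show ?thesis .
qed

lemma lincomb_mv:
  fixes Es :: "nat \<Rightarrow> 'a::field mat"
  assumes Es: "\<And>i. i \<le> d \<Longrightarrow> Es i \<in> carrier_mat (d+1) (d+1)" and x: "x \<in> carrier_vec (d+1)" and r: "r < d+1"
  shows "(mat_lincomb d c Es *\<^sub>v x) $ r = (\<Sum>i\<in>{0..d}. c i * (Es i *\<^sub>v x) $ r)"
proof -
  have "(mat_lincomb d c Es *\<^sub>v x) $ r = (\<Sum>k\<in>{0..<d+1}. (\<Sum>i\<in>{0..d}. c i * Es i $$ (r,k)) * x $ k)"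
    using x r by (subst mv_sum[of _ "d+1"]) (auto simp: mat_lincomb_def)
  also have "\<dots> = (\<Sum>k\<in>{0..<d+1}. \<Sum>i\<in>{0..d}. c i * (Es i $$ (r,k) * x $ k))"
    by (simp add: sum_distrib_right mult.assoc)
  also have "\<dots> = (\<Sum>i\<in>{0..d}. \<Sum>k\<in>{0..<d+1}. c i * (Es i $$ (r,k) * x $ k))"
    by (rule sum.swap)
  also have "\<dots> = (\<Sum>i\<in>{0..d}. c i * (Es i *\<^sub>v x) $ r)"
  proof (rule sum.cong)
    fix i assume "i \<in> {0..d}"
    then have i: "i \<le> d" by simp
    show "(\<Sum>k\<in>{0..<d+1}. c i * (Es i $$ (r,k) * x $ k)) = c i * (Es i *\<^sub>v x) $ r"
      by (subst mv_sum[OF Es[OF i] x r]) (simp only: sum_distrib_left)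
  qed simp
  finally show ?thesis .
qed



lemma rev_sum_cong:
  fixes f g :: "nat \<Rightarrow> 'a::comm_monoid_add"
  assumes "\<And>m. m \<le> d \<Longrightarrow> g m = f (d - m)"
  shows "(\<Sum>m=0..d. g m) = (\<Sum>m=0..d. f m)"
proof -
  have "(\<Sum>m=0..d. f m) = (\<Sum>m=0..d. f (d + 0 - m))" by (rule sum.atLeastAtMost_rev)
  also have "\<dots> = (\<Sum>m=0..d. g m)" using assms by (intro sum.cong) auto
  finally show ?thesis by simp
qed

lemma mv_sum_d: "X \<in> carrier_mat (d+1) (d+1) \<Longrightarrow> v \<in> carrier_vec (d+1) \<Longrightarrow> i \<le> d \<Longrightarrow>
   (X *\<^sub>v v) $ i = (\<Sum>k=0..d. X $$ (i,k) * v $ k)"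
  using mv_sum[of X "d+1" v i] by (simp add: atLeastLessThanSuc_atLeastAtMost)

lemma dmat_mv: assumes v: "v \<in> carrier_vec n" and j: "j < n"
  shows "(dmat n f *\<^sub>v v) $ j = f j * v $ j"
proof -
  have "(dmat n f *\<^sub>v v) $ j = (\<Sum>k\<in>{0..<n}. (if j = k then f j else 0) * v $ k)"
    using v j by (subst mv_sum[of _ n]) (auto simp: dmat_def intro!: sum.cong)
  also have "\<dots> = f j * v $ j" using j by (simp add: if_distrib[of "\<lambda>x. x * _"] cong: if_cong)
  finally show ?thesis .
qed

lemma prim_idem_kill: "prim_idem d A th i E \<Longrightarrow> k < d+1 \<Longrightarrow> k \<noteq> i \<Longrightarrow> v \<in> carrier_vec (d+1) \<Longrightarrow> A *\<^sub>v v = th k \<cdot>\<^sub>v v \<Longrightarrow> E *\<^sub>v v = 0\<^sub>v (d+1)"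
proof -
  assume h: "prim_idem d A th i E" "k < d+1" "k \<noteq> i" "v \<in> carrier_vec (d+1)" "A *\<^sub>v v = th k \<cdot>\<^sub>v v"
  then have "\<forall>j\<le>d. j \<noteq> i \<longrightarrow> (\<forall>v\<in>carrier_vec (d+1). A *\<^sub>v v = th j \<cdot>\<^sub>v v \<longrightarrow> E *\<^sub>v v = 0\<^sub>v (d+1))"
    unfolding prim_idem_def by blast
  moreover have "k \<le> d" using h(2) by simp
  ultimately show ?thesis using h by blast
qed

theorem proposition11p4:
  fixes d :: nat and A :: "'a::field mat" and Es E :: "nat \<Rightarrow> 'a mat"
    and th ths :: "nat \<Rightarrow> 'a"
  assumes "d \<ge> 1"
    and "orth_idem_system d Es"
    and "A \<in> carrier_mat (d+1) (d+1)"
    and "tridiag_wrt d Es A"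
    and "mult_free d A th"
    and "\<forall>i\<le>d. prim_idem d A th i (E i)"
    and "\<forall>i\<le>d. mat_trace (Es i * A) = 0"
    and "leonard_system d A E (mat_lincomb d ths Es) Es"
  shows "\<forall>i<d. th i * (ths (d - i - 1) - ths (i + 1)) = th (i + 1) * (ths (d - i) - ths i)"
proof -
  note d1 = assms(1) and orth = assms(2) and Acar = assms(3) and trEs = assms(4)
    and mfA = assms(5) and pE = assms(6) and bip = assms(7) and leo = assms(8)
  define As where "As = mat_lincomb d ths Es"
  obtain th2 ths2 where mfAs: "mult_free d As ths2" and pAs: "\<forall>i\<le>d. prim_idem d As ths2 i (Es i)"
    and tE: "tridiag_wrt d E As"
    using leo unfolding leonard_system_def As_def by blast
  have Ascar: "As \<in> carrier_mat (d+1) (d+1)" using mfAs by (simp add: mult_free_def)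
  have thinj: "inj_on th {0..d}" using mfA by (simp add: mult_free_def)
  have Ecar: "\<And>j. j < d+1 \<Longrightarrow> E j \<in> carrier_mat (d+1) (d+1)" using pE by (simp add: prim_idem_def)
  have Escar: "\<And>j. j < d+1 \<Longrightarrow> Es j \<in> carrier_mat (d+1) (d+1)" using pAs by (simp add: prim_idem_def)
  have pA1: "\<And>j. j < d+1 \<Longrightarrow> eigenvalue A (th j)" using mfA by (simp add: mult_free_def)
  have pA2: "\<And>j v. j < d+1 \<Longrightarrow> v \<in> carrier_vec (d+1) \<Longrightarrow> A *\<^sub>v v = th j \<cdot>\<^sub>v v \<Longrightarrow> E j *\<^sub>v v = v"
    using pE by (simp add: prim_idem_def)
  have pA3: "\<And>j k v. j < d+1 \<Longrightarrow> k < d+1 \<Longrightarrow> k \<noteq> j \<Longrightarrow> v \<in> carrier_vec (d+1) \<Longrightarrow> A *\<^sub>v v = th k \<cdot>\<^sub>v v \<Longrightarrow> E j *\<^sub>v v = 0\<^sub>v (d+1)"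
  proof -
    fix j k v assume h: "j < d+1" "k < d+1" "k \<noteq> j" "v \<in> carrier_vec (d+1)" "A *\<^sub>v v = th k \<cdot>\<^sub>v v"
    have "prim_idem d A th j (E j)" using pE h(1) by simp
    then show "E j *\<^sub>v v = 0\<^sub>v (d+1)" using prim_idem_kill h by blast
  qed
  obtain Ca Cai where CC: "Ca \<in> carrier_mat (d+1) (d+1) \<and> Cai \<in> carrier_mat (d+1) (d+1) \<and>
      Ca * Cai = 1\<^sub>m (d+1) \<and> Cai * Ca = 1\<^sub>m (d+1) \<and>
      (\<forall>j<d+1. E j = Ca * Umat (d+1) j * Cai) \<and> Cai * A * Ca = dmat (d+1) th"
  proof -
    have "\<exists>Ca Cai. Ca \<in> carrier_mat (d+1) (d+1) \<and> Cai \<in> carrier_mat (d+1) (d+1) \<and>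
      Ca * Cai = 1\<^sub>m (d+1) \<and> Cai * Ca = 1\<^sub>m (d+1) \<and>
      (\<forall>j<d+1. E j = Ca * Umat (d+1) j * Cai) \<and> Cai * A * Ca = dmat (d+1) th"
      apply (rule eig_basis[where M=A and n="d+1" and lam=th and P=E])
      apply (fact Acar) apply (fact pA1) apply (fact Ecar) apply (fact pA2) apply (fact pA3) done
    then show ?thesis using that by blast
  qed
  have Ca: "Ca \<in> carrier_mat (d+1) (d+1)" "Cai \<in> carrier_mat (d+1) (d+1)"
      "Ca * Cai = 1\<^sub>m (d+1)" "Cai * Ca = 1\<^sub>m (d+1)" and DA: "Cai * A * Ca = dmat (d+1) th"
    using CC by simp_all
  have EC: "\<And>j. j < d+1 \<Longrightarrow> E j = Ca * Umat (d+1) j * Cai" using CC by simp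
  have pS1: "\<And>j. j < d+1 \<Longrightarrow> eigenvalue As (ths2 j)" using mfAs by (simp add: mult_free_def)
  have pS2: "\<And>j v. j < d+1 \<Longrightarrow> v \<in> carrier_vec (d+1) \<Longrightarrow> As *\<^sub>v v = ths2 j \<cdot>\<^sub>v v \<Longrightarrow> Es j *\<^sub>v v = v"
    using pAs by (simp add: prim_idem_def)
  have pS3: "\<And>j k v. j < d+1 \<Longrightarrow> k < d+1 \<Longrightarrow> k \<noteq> j \<Longrightarrow> v \<in> carrier_vec (d+1) \<Longrightarrow> As *\<^sub>v v = ths2 k \<cdot>\<^sub>v v \<Longrightarrow> Es j *\<^sub>v v = 0\<^sub>v (d+1)"
  proof -
    fix j k v assume h: "j < d+1" "k < d+1" "k \<noteq> j" "v \<in> carrier_vec (d+1)" "As *\<^sub>v v = ths2 k \<cdot>\<^sub>v v"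
    have "prim_idem d As ths2 j (Es j)" using pAs h(1) by simp
    then show "Es j *\<^sub>v v = 0\<^sub>v (d+1)" using prim_idem_kill h by blast
  qed
  obtain Bs Bsi where BB: "Bs \<in> carrier_mat (d+1) (d+1) \<and> Bsi \<in> carrier_mat (d+1) (d+1) \<and>
      Bs * Bsi = 1\<^sub>m (d+1) \<and> Bsi * Bs = 1\<^sub>m (d+1) \<and>
      (\<forall>j<d+1. Es j = Bs * Umat (d+1) j * Bsi) \<and> Bsi * As * Bs = dmat (d+1) ths2"
  proof -
    have "\<exists>Bs Bsi. Bs \<in> carrier_mat (d+1) (d+1) \<and> Bsi \<in> carrier_mat (d+1) (d+1) \<and>
      Bs * Bsi = 1\<^sub>m (d+1) \<and> Bsi * Bs = 1\<^sub>m (d+1) \<and>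
      (\<forall>j<d+1. Es j = Bs * Umat (d+1) j * Bsi) \<and> Bsi * As * Bs = dmat (d+1) ths2"
      apply (rule eig_basis[where M=As and n="d+1" and lam=ths2 and P=Es])
      apply (fact Ascar) apply (fact pS1) apply (fact Escar) apply (fact pS2) apply (fact pS3) done
    then show ?thesis using that by blast
  qed
  have Bs: "Bs \<in> carrier_mat (d+1) (d+1)" "Bsi \<in> carrier_mat (d+1) (d+1)"
      "Bs * Bsi = 1\<^sub>m (d+1)" "Bsi * Bs = 1\<^sub>m (d+1)" and DAs: "Bsi * As * Bs = dmat (d+1) ths2"
    using BB by simp_all
  have EsB: "\<And>j. j < d+1 \<Longrightarrow> Es j = Bs * Umat (d+1) j * Bsi" using BB by simp
  have as: "\<And>P Q R. P \<in> carrier_mat (d+1) (d+1) \<Longrightarrow> Q \<in> carrier_mat (d+1) (d+1) \<Longrightarrow> R \<in> carrier_mat (d+1) (d+1) \<Longrightarrow> P * Q * R = P * (Q * R)"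
    by simp
  have asv: "\<And>P Q v. P \<in> carrier_mat (d+1) (d+1) \<Longrightarrow> Q \<in> carrier_mat (d+1) (d+1) \<Longrightarrow> v \<in> carrier_vec (d+1) \<Longrightarrow> (P * Q) *\<^sub>v v = P *\<^sub>v (Q *\<^sub>v v)"
    by simp
  have Esprod: "\<And>i m. i \<le> d \<Longrightarrow> m \<le> d \<Longrightarrow> Es i * Es m = (if i = m then Es i else 0\<^sub>m (d+1) (d+1))"
    using orth by (simp add: orth_idem_system_def)
  have thsq: "ths2 m = ths m" if m: "m \<le> d" for m
  proof -
    define x where "x = Bs *\<^sub>v unit_vec (d+1) m"
    have xc: "x \<in> carrier_vec (d+1)" using Bs by (simp add: x_def)
    have xnz: "x \<noteq> 0\<^sub>v (d+1)"
    proof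
      assume "x = 0\<^sub>v (d+1)"
      then have "Bsi *\<^sub>v x = 0\<^sub>v (d+1)" using Bs by (intro eq_vecI) auto
      moreover have "Bsi *\<^sub>v x = unit_vec (d+1) m" using Bs by (simp add: x_def asv[symmetric])
      ultimately have "(unit_vec (d+1) m :: 'a vec) = 0\<^sub>v (d+1)" by simp
      moreover have "m < d+1" using m by simp
      ultimately show False using unit_vec_nonzero[of m "d+1"] by simp
    qed
    have Ex: "Es m *\<^sub>v x = x"
    proof -
      have "Es m *\<^sub>v x = (Bs * Umat (d+1) m * Bsi * Bs) *\<^sub>v unit_vec (d+1) m"
        using EsB[of m] m Bs by (simp add: x_def asv)
      also have "Bs * Umat (d+1) m * Bsi * Bs = Bs * Umat (d+1) m"
        using Bs by (simp add: as)
      also have "(Bs * Umat (d+1) m) *\<^sub>v unit_vec (d+1) m = Bs *\<^sub>v (Umat (d+1) m *\<^sub>v unit_vec (d+1) m)"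
        by (rule asv) (use Bs in simp_all)
      also have "Umat (d+1) m *\<^sub>v unit_vec (d+1) m = unit_vec (d+1) m"
        using m by (simp add: Umat_mv)
      finally show ?thesis by (simp add: x_def)
    qed
    have "prim_idem d As ths2 m (Es m)" using pAs m by simp
    then have "As *\<^sub>v (Es m *\<^sub>v x) = ths2 m \<cdot>\<^sub>v (Es m *\<^sub>v x)" using xc unfolding prim_idem_def by blast
    then have 1: "As *\<^sub>v x = ths2 m \<cdot>\<^sub>v x" using Ex by simp
    have 2: "As *\<^sub>v x = ths m \<cdot>\<^sub>v x"
    proof (rule eq_vecI)
      fix r assume "r < dim_vec (ths m \<cdot>\<^sub>v x)"
      then have r: "r < d+1" using xc by simp
      have "(As *\<^sub>v x) $ r = (\<Sum>i\<in>{0..d}. ths i * (Es i *\<^sub>v x) $ r)"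
        unfolding As_def by (rule lincomb_mv[OF _ xc r]) (use Escar in simp)
      also have "\<dots> = (\<Sum>i\<in>{0..d}. if i = m then ths m * x $ r else 0)"
      proof (rule sum.cong)
        fix i assume "i \<in> {0..d}"
        then have i: "i \<le> d" by simp
        have "Es i *\<^sub>v x = Es i *\<^sub>v (Es m *\<^sub>v x)" using Ex by simp
        also have "\<dots> = (Es i * Es m) *\<^sub>v x" using Escar i m xc by (simp add: asv)
        finally have "Es i *\<^sub>v x = (if i = m then Es m else 0\<^sub>m (d+1) (d+1)) *\<^sub>v x"
          using Esprod[OF i m] by simp
        then show "ths i * (Es i *\<^sub>v x) $ r = (if i = m then ths m * x $ r else 0)"
          using Ex r xc by auto
      qed simp
      also have "\<dots> = ths m * x $ r" using m by simp
      finally show "(As *\<^sub>v x) $ r = (ths m \<cdot>\<^sub>v x) $ r" using r xc by simp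
    qed (use Ascar xc in simp)
    have "(ths2 m - ths m) \<cdot>\<^sub>v x = 0\<^sub>v (d+1)"
      using 1 2 xc by (intro eq_vecI) (auto simp: vec_eq_iff algebra_simps)
    then have "ths2 m - ths m = 0" by (rule smult_vec_eq0[OF xc xnz])
    then show ?thesis by simp
  qed
  define TT where "TT = Bsi * A * Bs"
  define UU where "UU = Cai * Bs"
  define MM where "MM = Cai * As * Ca"
  have TTc: "TT \<in> carrier_mat (d+1) (d+1)" using Bs Acar by (simp add: TT_def)
  have UUc: "UU \<in> carrier_mat (d+1) (d+1)" using Bs Ca by (simp add: UU_def)
  have MMc: "MM \<in> carrier_mat (d+1) (d+1)" using Ca Ascar by (simp add: MM_def)
  define T where "T j m = TT $$ (j,m)" for j m
  define U where "U j m = UU $$ (j,m)" for j m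
  define Mm where "Mm j m = MM $$ (j,m)" for j m
  have BsL: "\<And>X. X \<in> carrier_mat (d+1) (d+1) \<Longrightarrow> Bs * (Bsi * X) = X"
    using Bs by (simp add: as[symmetric])
  have CaL: "\<And>X. X \<in> carrier_mat (d+1) (d+1) \<Longrightarrow> Ca * (Cai * X) = X"
    using Ca by (simp add: as[symmetric])
  have UT: "UU * TT = dmat (d+1) th * UU"
    unfolding UU_def TT_def DA[symmetric] using Bs Ca Acar by (simp add: as BsL CaL)
  have dq: "dmat (d+1) ths2 = dmat (d+1) ths"
    unfolding dmat_def using thsq by (intro eq_matI) auto
  have UD: "UU * dmat (d+1) ths = MM * UU"
    unfolding UU_def MM_def dq[symmetric] DAs[symmetric] using Bs Ca Ascar by (simp add: as BsL CaL)
  have vc: "vec (d+1) c \<in> carrier_vec (d+1)" for c :: "nat \<Rightarrow> 'a" by simp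
  have mvc: "(X *\<^sub>v vec (d+1) c) $ i = (\<Sum>k=0..d. X $$ (i,k) * c k)"
    if "X \<in> carrier_mat (d+1) (d+1)" "i \<le> d" for X c i
  proof -
    have "(X *\<^sub>v vec (d+1) c) $ i = (\<Sum>k=0..d. X $$ (i,k) * vec (d+1) c $ k)"
      by (rule mv_sum_d) (use that in simp_all)
    also have "\<dots> = (\<Sum>k=0..d. X $$ (i,k) * c k)" by (intro sum.cong) auto
    finally show ?thesis .
  qed
  have mvv: "(X *\<^sub>v v) $ i = (\<Sum>k=0..d. X $$ (i,k) * v $ k)"
    if "X \<in> carrier_mat (d+1) (d+1)" "v \<in> carrier_vec (d+1)" "i \<le> d" for X v i
    using mv_sum_d[OF that] .
  have H2: "(\<Sum>m=0..d. U j m * (\<Sum>l=0..d. T m l * c l)) = th j * (\<Sum>m=0..d. U j m * c m)"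
    if j: "j \<le> d" for c j
  proof -
    let ?c = "vec (d+1) c"
    have dvc: "dmat (d+1) ths *\<^sub>v ?c \<in> carrier_vec (d+1)" by (rule mult_mat_vec_carrier[OF dmat_carrier]) simp
    have uvc: "UU *\<^sub>v ?c \<in> carrier_vec (d+1)" by (rule mult_mat_vec_carrier[OF UUc]) simp
    have tvc: "TT *\<^sub>v ?c \<in> carrier_vec (d+1)" by (rule mult_mat_vec_carrier[OF TTc]) simp
    have "(\<Sum>m=0..d. U j m * (\<Sum>l=0..d. T m l * c l)) = (\<Sum>m=0..d. UU $$ (j,m) * (TT *\<^sub>v ?c) $ m)"
    proof (intro sum.cong refl)
      fix m assume "m \<in> {0..d}"
      then show "U j m * (\<Sum>l=0..d. T m l * c l) = UU $$ (j,m) * (TT *\<^sub>v ?c) $ m"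
        using mvc[OF TTc, of m c] by (simp add: U_def T_def)
    qed
    also have "\<dots> = (UU *\<^sub>v (TT *\<^sub>v ?c)) $ j" using mvv[OF UUc tvc j] by simp
    also have "\<dots> = ((UU * TT) *\<^sub>v ?c) $ j" using UUc TTc asv[OF UUc TTc, of ?c] by simp
    also have "\<dots> = (dmat (d+1) th *\<^sub>v (UU *\<^sub>v ?c)) $ j" using UUc UT asv[OF dmat_carrier UUc, of ?c] by simp
    also have "\<dots> = th j * (UU *\<^sub>v ?c) $ j" using UUc j dmat_mv[of "UU *\<^sub>v ?c" "d+1" j th] by simp
    also have "\<dots> = th j * (\<Sum>m=0..d. U j m * c m)" using mvc[OF UUc j, of c] by (simp add: U_def)
    finally show ?thesis .
  qed
  have H3: "(\<Sum>m=0..d. U j m * (ths m * c m)) = (\<Sum>m=0..d. Mm j m * (\<Sum>l=0..d. U m l * c l))"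
    if j: "j \<le> d" for c j
  proof -
    let ?c = "vec (d+1) c"
    have dvc: "dmat (d+1) ths *\<^sub>v ?c \<in> carrier_vec (d+1)" by (rule mult_mat_vec_carrier[OF dmat_carrier]) simp
    have uvc: "UU *\<^sub>v ?c \<in> carrier_vec (d+1)" by (rule mult_mat_vec_carrier[OF UUc]) simp
    have tvc: "TT *\<^sub>v ?c \<in> carrier_vec (d+1)" by (rule mult_mat_vec_carrier[OF TTc]) simp
    have "(\<Sum>m=0..d. U j m * (ths m * c m)) = (\<Sum>m=0..d. UU $$ (j,m) * (dmat (d+1) ths *\<^sub>v ?c) $ m)"
    proof (intro sum.cong refl)
      fix m assume "m \<in> {0..d}"
      then show "U j m * (ths m * c m) = UU $$ (j,m) * (dmat (d+1) ths *\<^sub>v ?c) $ m"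
        using dmat_mv[of ?c "d+1" m ths] by (simp add: U_def)
    qed
    also have "\<dots> = (UU *\<^sub>v (dmat (d+1) ths *\<^sub>v ?c)) $ j" using mvv[OF UUc dvc j] by simp
    also have "\<dots> = ((UU * dmat (d+1) ths) *\<^sub>v ?c) $ j" using asv[OF UUc dmat_carrier, of ?c] by simp
    also have "\<dots> = (MM *\<^sub>v (UU *\<^sub>v ?c)) $ j" using UD asv[OF MMc UUc, of ?c] by simp
    also have "\<dots> = (\<Sum>m=0..d. MM $$ (j,m) * (UU *\<^sub>v ?c) $ m)" using mvv[OF MMc uvc j] by simp
    also have "\<dots> = (\<Sum>m=0..d. Mm j m * (\<Sum>l=0..d. U m l * c l))"
    proof (intro sum.cong refl)
      fix m assume "m \<in> {0..d}"
      then show "MM $$ (j,m) * (UU *\<^sub>v ?c) $ m = Mm j m * (\<Sum>l=0..d. U m l * c l)"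
        using mvc[OF UUc, of m c] by (simp add: U_def Mm_def)
    qed
    finally show ?thesis .
  qed
  have sandT: "(Es j * A * Es m = 0\<^sub>m (d+1) (d+1)) \<longleftrightarrow> T j m = 0" if "j \<le> d" "m \<le> d" for j m
    using sandwich[OF Bs(1-4) Acar, of j m] EsB[of j] EsB[of m] that by (simp add: T_def TT_def)
  have sandM: "(E j * As * E m = 0\<^sub>m (d+1) (d+1)) \<longleftrightarrow> Mm j m = 0" if "j \<le> d" "m \<le> d" for j m
    using sandwich[OF Ca(1-4) Ascar, of j m] EC[of j] EC[of m] that by (simp add: Mm_def MM_def)
  have trEs0: "\<And>i j. i \<le> d \<Longrightarrow> j \<le> d \<Longrightarrow> (i > j + 1 \<or> j > i + 1) \<Longrightarrow> Es i * A * Es j = 0\<^sub>m (d+1) (d+1)"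
    and trEs1: "\<And>i j. i \<le> d \<Longrightarrow> j \<le> d \<Longrightarrow> (i = j + 1 \<or> j = i + 1) \<Longrightarrow> Es i * A * Es j \<noteq> 0\<^sub>m (d+1) (d+1)"
    using trEs unfolding tridiag_wrt_def by blast+
  have tE0: "\<And>i j. i \<le> d \<Longrightarrow> j \<le> d \<Longrightarrow> (i > j + 1 \<or> j > i + 1) \<Longrightarrow> E i * As * E j = 0\<^sub>m (d+1) (d+1)"
    and tE1: "\<And>i j. i \<le> d \<Longrightarrow> j \<le> d \<Longrightarrow> (i = j + 1 \<or> j = i + 1) \<Longrightarrow> E i * As * E j \<noteq> 0\<^sub>m (d+1) (d+1)"
    using tE unfolding tridiag_wrt_def by blast+
  have T0: "T j m = 0" if "j \<le> d" "m \<le> d" "j \<noteq> m+1" "m \<noteq> j+1" for j m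
  proof (cases "j = m")
    case True
    have "mat_trace (Es j * A) = TT $$ (j,j)"
      using trace_sandwich[OF Bs(1,2) Acar, of j] EsB[of j] that by (simp add: TT_def)
    then show ?thesis using bip that True by (simp add: T_def)
  next
    case False
    then have "j > m + 1 \<or> m > j + 1" using that by linarith
    then show ?thesis using sandT trEs0 that by blast
  qed
  have Tsub: "T j (j-1) \<noteq> 0" if "1 \<le> j" "j \<le> d" for j
    using sandT[of j "j-1"] trEs1[of j "j-1"] that by simp
  have Tsup: "T j (j+1) \<noteq> 0" if "j < d" for j
    using sandT[of j "j+1"] trEs1[of j "j+1"] that by simp
  have M0: "Mm j m = 0" if "j \<le> d" "m \<le> d" "j \<noteq> m+1" "m \<noteq> j+1" "j \<noteq> m" for j m
  proof -
    have "j > m + 1 \<or> m > j + 1" using that by linarith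
    then show ?thesis using sandM tE0 that by blast
  qed
  have Msup: "Mm j (j+1) \<noteq> 0" if "j < d" for j
    using sandM[of j "j+1"] tE1[of j "j+1"] that by simp
  have H5: "\<exists>c. (\<Sum>l=0..d. U m l * c l) \<noteq> 0" if m: "m \<le> d" for m
  proof -
    define y where "y = Bsi *\<^sub>v (Ca *\<^sub>v unit_vec (d+1) m)"
    have yc: "y \<in> carrier_vec (d+1)" using Bs Ca by (simp add: y_def)
    have "UU *\<^sub>v y = unit_vec (d+1) m"
    proof -
      have zc: "Ca *\<^sub>v unit_vec (d+1) m \<in> carrier_vec (d+1)" by (rule mult_mat_vec_carrier[OF Ca(1)]) simp
      have "UU *\<^sub>v y = Cai *\<^sub>v (Bs *\<^sub>v y)" unfolding UU_def by (rule asv[OF Ca(2) Bs(1) yc])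
      also have "Bs *\<^sub>v y = (Bs * Bsi) *\<^sub>v (Ca *\<^sub>v unit_vec (d+1) m)"
        unfolding y_def by (rule asv[OF Bs(1) Bs(2) zc, symmetric])
      also have "\<dots> = Ca *\<^sub>v unit_vec (d+1) m" using Bs(3) zc by simp
      also have "Cai *\<^sub>v \<dots> = (Cai * Ca) *\<^sub>v unit_vec (d+1) m"
        by (rule asv[OF Ca(2) Ca(1), symmetric]) simp
      finally show ?thesis using Ca by simp
    qed
    then have "(\<Sum>l=0..d. U m l * y $ l) = 1"
      using mvv[OF UUc yc m] m by (simp add: U_def)
    then show ?thesis by (intro exI[of _ "\<lambda>l. y $ l"]) simp
  qed
  have c1: "core d T U Mm th ths"
    by (rule core.intro) (fact T0 Tsub H2 M0 H3 Msup H5 thinj)+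
  have T0': "T (d-j) (d-m) = 0" if "j \<le> d" "m \<le> d" "j \<noteq> m+1" "m \<noteq> j+1" for j m
    by (rule T0) (use that in linarith)+
  have Tsub': "T (d-j) (d-(j-1)) \<noteq> 0" if "1 \<le> j" "j \<le> d" for j
  proof -
    have "d - (j-1) = (d-j) + 1" using that by linarith
    then show ?thesis using Tsup[of "d-j"] that by simp
  qed
  have H2': "(\<Sum>m=0..d. U j (d-m) * (\<Sum>l=0..d. T (d-m) (d-l) * c l)) = th j * (\<Sum>m=0..d. U j (d-m) * c m)"
    if j: "j \<le> d" for c j
  proof -
    define c' where "c' l = c (d-l)" for l
    have "(\<Sum>m=0..d. U j (d-m) * (\<Sum>l=0..d. T (d-m) (d-l) * c l)) = (\<Sum>m=0..d. U j m * (\<Sum>l=0..d. T m l * c' l))"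
    proof (rule rev_sum_cong)
      fix m assume m: "m \<le> d"
      have "(\<Sum>l=0..d. T (d-m) (d-l) * c l) = (\<Sum>l=0..d. T (d-m) l * c' l)"
        by (rule rev_sum_cong) (simp add: c'_def)
      then show "U j (d-m) * (\<Sum>l=0..d. T (d-m) (d-l) * c l) = U j (d-m) * (\<Sum>l=0..d. T (d-m) l * c' l)" by simp
    qed
    also have "\<dots> = th j * (\<Sum>m=0..d. U j m * c' m)" by (rule H2[OF j])
    also have "(\<Sum>m=0..d. U j m * c' m) = (\<Sum>m=0..d. U j (d-m) * c m)"
      by (rule rev_sum_cong[symmetric]) (simp add: c'_def)
    finally show ?thesis .
  qed
  have H3': "(\<Sum>m=0..d. U j (d-m) * (ths (d-m) * c m)) = (\<Sum>m=0..d. Mm j m * (\<Sum>l=0..d. U m (d-l) * c l))"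
    if j: "j \<le> d" for c j
  proof -
    define c' where "c' l = c (d-l)" for l
    have "(\<Sum>m=0..d. U j (d-m) * (ths (d-m) * c m)) = (\<Sum>m=0..d. U j m * (ths m * c' m))"
      by (rule rev_sum_cong) (simp add: c'_def)
    also have "\<dots> = (\<Sum>m=0..d. Mm j m * (\<Sum>l=0..d. U m l * c' l))" by (rule H3[OF j])
    also have "\<dots> = (\<Sum>m=0..d. Mm j m * (\<Sum>l=0..d. U m (d-l) * c l))"
    proof (intro sum.cong refl)
      fix m
      have "(\<Sum>l=0..d. U m (d-l) * c l) = (\<Sum>l=0..d. U m l * c' l)"
        by (rule rev_sum_cong) (simp add: c'_def)
      then show "Mm j m * (\<Sum>l=0..d. U m l * c' l) = Mm j m * (\<Sum>l=0..d. U m (d-l) * c l)" by simp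
    qed
    finally show ?thesis .
  qed
  have H5': "\<exists>c. (\<Sum>l=0..d. U m (d-l) * c l) \<noteq> 0" if m: "m \<le> d" for m
  proof -
    obtain c0 where c0: "(\<Sum>l=0..d. U m l * c0 l) \<noteq> 0" using H5[OF m] by blast
    have "(\<Sum>l=0..d. U m (d-l) * c0 (d-l)) = (\<Sum>l=0..d. U m l * c0 l)"
      by (rule rev_sum_cong) simp
    then show ?thesis using c0 by (intro exI[of _ "\<lambda>l. c0 (d-l)"]) simp
  qed
  have c2: "core d (\<lambda>j m. T (d-j) (d-m)) (\<lambda>j m. U j (d-m)) Mm th (\<lambda>k. ths (d-k))"
    by (rule core.intro) (fact T0' Tsub' H2' M0 H3' Msup H5' thinj)+
  interpret c1: core d T U Mm th ths by (rule c1)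
  interpret c2: core d "\<lambda>j m. T (d-j) (d-m)" "\<lambda>j m. U j (d-m)" Mm th "\<lambda>k. ths (d-k)" by (rule c2)
  show ?thesis
  proof (rule final_alg[OF d1 thinj])
    show "\<And>k. 1 \<le> k \<Longrightarrow> k \<le> d \<Longrightarrow> (\<Sum>h<k. th h) \<noteq> 0"
      using c1.Ssum_nz unfolding c1.Ssum_def by blast
    fix i assume i: "i < d"
    show "ths i + (if i = 0 then 0 else (ths i - ths (i-1)) * (\<Sum>h<i. th h) / (th i - th (i-1)))
              - (ths (i+1) - ths i) * (\<Sum>h<i+1. th h) / (th (i+1) - th i)
        = ths (d-i) + (if i = 0 then 0 else (ths (d-i) - ths (d-(i-1))) * (\<Sum>h<i. th h) / (th i - th (i-1)))
              - (ths (d-(i+1)) - ths (d-i)) * (\<Sum>h<i+1. th h) / (th (i+1) - th i)"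
      using c1.q_formula[OF i] c2.q_formula[OF i] unfolding c1.Ssum_def c2.Ssum_def by simp
  qed
qed

end
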